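(* Let $n\ge2$ and $x,y\in[0,1[$. Then: (1) $\rho_x$ and $\rho_y$ are unitarily equivalent representations of $V_n$ if and only if $\mathrm{orb}(x)=\mathrm{orb}(y)$; (2) $\rho_x$ is an irreducible representation of $V_n$ on $H_x$.
   Context: $f(y)=ny\bmod1$ on $[0,1[$; $\mathrm{orb}(x)=\{y\in[0,1[:\ f^p(y)=f^q(x)\text{ for some }p,q\in\mathbb{N}\}$; $H_x=\ell^2(\mathrm{orb}(x))$ with orthonormal basis $\{\delta_y\}$; $S_i\delta_y=\delta_{(y+i-1)/n}$ ($1\le i\le n$); $\pi_x:\mathcal{O}_n\to B(H_x)$ is the representation of the Cuntz algebra ($\sum_j s_js_j^*=1$, $s_i^*s_j=\delta_{ij}1$) with $\pi_x(s_i)=S_i$. For a word $u=u_1\cdots u_r$ over $\{1,\dots,n\}$, $\phi(u)=\big[\sum_i\frac{u_i-1}{n^i},\sum_i\frac{u_i-1}{n^i}+n^{-r}\big[$ and $s_u=s_{u_1}\cdots s_{u_r}$. $V_n$ is the group of bijections $g$ of $[0,1[$ for which there are admissible languages (finite sets of words such that every infinite word has exactly one of them as prefix) $\{a_1,\dots,a_r\}$, $\{b_1,\dots,b_r\}$ with $g$ mapping $\phi(b_i)$ onto $\phi(a_i)$ by the increasing affine map; $\Psi_n(g)=\sum_i s_{a_i}s_{b_i}^*$, and $\rho_x=\pi_x\circ\Psi_n$, a unitary representation of $V_n$ on $H_x$. Two representations $\rho_1,\rho_2$ of a group $G$ on $H_1,H_2$ are unitarily equivalent if there is a unitary $U:H_1\to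 H_2$ with $U\rho_1(g)=\rho_2(g)U$ for all $g$; irreducible means the commutant of $\rho(G)$ is $\mathbb{C}1$. *)

theory Defs
  imports "HOL-Analysis.Analysis"
begin

definition fmap :: "nat \<Rightarrow> real \<Rightarrow> real" where
  "fmap n y = frac (real n * y)"

definition orb :: "nat \<Rightarrow> real \<Rightarrow> real set" where
  "orb n x = {y \<in> {0..<1}. \<exists>p q. (fmap n ^^ p) y = (fmap n ^^ q) x}"

section \<open>The Hilbert space H_x = l2(orb x), as functions supported on orb x\<close>

definition Hsp :: "nat \<Rightarrow> real \<Rightarrow> (real \<Rightarrow> complex) set" where
  "Hsp n x = {h. (\<forall>y. y \<notin> orb n x \<longrightarrow> h y = 0) \<and>
                 (\<lambda>y. (cmod (h y))\<^sup>2) summable_on orb n x}"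

definition ip :: "real set \<Rightarrow> (real \<Rightarrow> complex) \<Rightarrow> (real \<Rightarrow> complex) \<Rightarrow> complex" where
  "ip A h k = infsum (\<lambda>y. h y * cnj (k y)) A"

section \<open>The Cuntz isometries S_i (S_i delta_y = delta_((y+i-1)/n)) and their adjoints\<close>

definition Sop :: "nat \<Rightarrow> nat \<Rightarrow> (real \<Rightarrow> complex) \<Rightarrow> (real \<Rightarrow> complex)" where
  "Sop n i h = (\<lambda>z. if (real i - 1) / real n \<le> z \<and> z < real i / real n
                     then h (real n * z - (real i - 1)) else 0)"

text \<open>Adjoint of S_i: S_i^* delta_y = delta_(ny-(i-1)) if y in phi(i), else 0.\<close>
definition Sadj :: "nat \<Rightarrow> nat \<Rightarrow> (real \<Rightarrow> complex) \<Rightarrow> (real \<Rightarrow> complex)" where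
  "Sadj n i h = (\<lambda>w. if 0 \<le> w \<and> w < 1 then h ((w + real i - 1) / real n) else 0)"

definition sword :: "nat \<Rightarrow> nat list \<Rightarrow> (real \<Rightarrow> complex) \<Rightarrow> (real \<Rightarrow> complex)" where
  "sword n u = foldr (\<lambda>i T. Sop n i \<circ> T) u id"

definition sword_adj :: "nat \<Rightarrow> nat list \<Rightarrow> (real \<Rightarrow> complex) \<Rightarrow> (real \<Rightarrow> complex)" where
  "sword_adj n u = foldr (\<lambda>i T. T \<circ> Sadj n i) u id"

definition word_left :: "nat \<Rightarrow> nat list \<Rightarrow> real" where
  "word_left n u = (\<Sum>i<length u. (real (u ! i) - 1) / real n ^ (i + 1))"

definition phi :: "nat \<Rightarrow> nat list \<Rightarrow> real set" where
  "phi n u = {word_left n u ..< word_left n u + 1 / real n ^ length u}"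

definition is_word :: "nat \<Rightarrow> nat list \<Rightarrow> bool" where
  "is_word n u \<longleftrightarrow> set u \<subseteq> {1..n}"

definition admissible :: "nat \<Rightarrow> nat list set \<Rightarrow> bool" where
  "admissible n L \<longleftrightarrow> finite L \<and> (\<forall>u\<in>L. is_word n u) \<and>
     (\<forall>w::nat \<Rightarrow> nat. (\<forall>k. w k \<in> {1..n}) \<longrightarrow>
        (\<exists>!u. u \<in> L \<and> u = map w [0..<length u]))"

text \<open>A witness for g: pairs (a_i, b_i) with {a_i}, {b_i} admissible (listed without
repetition) and g mapping phi(b_i) onto phi(a_i) by the increasing affine map.\<close>
definition Vwitness :: "nat \<Rightarrow> (real \<Rightarrow> real) \<Rightarrow> (nat list \<times> nat list) list \<Rightarrow> bool" where
  "Vwitness n g ps \<longleftrightarrow>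
     distinct (map fst ps) \<and> distinct (map snd ps) \<and>
     admissible n (set (map fst ps)) \<and> admissible n (set (map snd ps)) \<and>
     (\<forall>(a, b)\<in>set ps. \<forall>y\<in>phi n b.
        g y = word_left n a + (y - word_left n b) * real n ^ length b / real n ^ length a)"

definition Vn :: "nat \<Rightarrow> (real \<Rightarrow> real) set" where
  "Vn n = {g. bij_betw g {0..<1} {0..<1} \<and> (\<exists>ps. Vwitness n g ps)}"

text \<open>Psi_n(g) = sum_i s_(a_i) s_(b_i)^*, represented via pi_x; the choice of the
witness is irrelevant (well-definedness of Psi_n).\<close>
definition Psi_op :: "nat \<Rightarrow> (nat list \<times> nat list) list \<Rightarrow> (real \<Rightarrow> complex) \<Rightarrow> (real \<Rightarrow> complex)" where
  "Psi_op n ps h = (\<lambda>z. sum_list (map (\<lambda>(a, b). sword n a (sword_adj n b h) z) ps))"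

definition rho :: "nat \<Rightarrow> (real \<Rightarrow> real) \<Rightarrow> (real \<Rightarrow> complex) \<Rightarrow> (real \<Rightarrow> complex)" where
  "rho n g = Psi_op n (SOME ps. Vwitness n g ps)"

definition lin_on :: "(real \<Rightarrow> complex) set \<Rightarrow> ((real \<Rightarrow> complex) \<Rightarrow> (real \<Rightarrow> complex)) \<Rightarrow> bool" where
  "lin_on H T \<longleftrightarrow> (\<forall>h\<in>H. \<forall>k\<in>H. T (\<lambda>z. h z + k z) = (\<lambda>z. T h z + T k z)) \<and>
                  (\<forall>c. \<forall>h\<in>H. T (\<lambda>z. c * h z) = (\<lambda>z. c * T h z))"

definition unitary_between :: "nat \<Rightarrow> real \<Rightarrow> real \<Rightarrow> ((real \<Rightarrow> complex) \<Rightarrow> (real \<Rightarrow> complex)) \<Rightarrow> bool" where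
  "unitary_between n x y U \<longleftrightarrow> U ` Hsp n x = Hsp n y \<and> lin_on (Hsp n x) U \<and>
     (\<forall>h\<in>Hsp n x. \<forall>k\<in>Hsp n x. ip (orb n y) (U h) (U k) = ip (orb n x) h k)"

definition unitarily_equivalent :: "nat \<Rightarrow> real \<Rightarrow> real \<Rightarrow> bool" where
  "unitarily_equivalent n x y \<longleftrightarrow>
     (\<exists>U. unitary_between n x y U \<and>
          (\<forall>g\<in>Vn n. \<forall>h\<in>Hsp n x. U (rho n g h) = rho n g (U h)))"

definition bounded_op :: "nat \<Rightarrow> real \<Rightarrow> ((real \<Rightarrow> complex) \<Rightarrow> (real \<Rightarrow> complex)) \<Rightarrow> bool" where
  "bounded_op n x T \<longleftrightarrow> T ` Hsp n x \<subseteq> Hsp n x \<and> lin_on (Hsp n x) T \<and>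
     (\<exists>C. \<forall>h\<in>Hsp n x. cmod (ip (orb n x) (T h) (T h)) \<le> C * cmod (ip (orb n x) h h))"

definition irreducible_rho :: "nat \<Rightarrow> real \<Rightarrow> bool" where
  "irreducible_rho n x \<longleftrightarrow>
     (\<forall>T. bounded_op n x T \<and> (\<forall>g\<in>Vn n. \<forall>h\<in>Hsp n x. T (rho n g h) = rho n g (T h))
        \<longrightarrow> (\<exists>c. \<forall>h\<in>Hsp n x. T h = (\<lambda>z. c * h z)))"

end

theory Submission
  imports Defs
begin


lemma wl_Nil[simp]: "word_left n [] = 0"
  by (simp add: word_left_def)

lemma wl_Cons: "word_left n (i # u) = (real i - 1) / real n + word_left n u / real n"
proof -
  have "word_left n (i # u) = (\<Sum>j<Suc (length u). (real ((i#u) ! j) - 1) / real n ^ (j + 1))"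
    by (simp add: word_left_def)
  also have "\<dots> = (real i - 1) / real n + (\<Sum>j<length u. (real (u ! j) - 1) / real n ^ (j + 2))"
    by (subst sum.lessThan_Suc_shift) simp
  also have "(\<Sum>j<length u. (real (u ! j) - 1) / real n ^ (j + 2)) = word_left n u / real n"
    unfolding word_left_def sum_divide_distrib
    by (intro sum.cong) (auto simp: field_simps)
  finally show ?thesis .
qed

lemma phi_Cons:
  assumes "n > 0"
  shows "z \<in> phi n (i # u) \<longleftrightarrow> real n * z - (real i - 1) \<in> phi n u"
  using assms by (simp add: phi_def wl_Cons field_simps)

lemma is_word_Cons[simp]: "is_word n (i # u) \<longleftrightarrow> i \<in> {1..n} \<and> is_word n u"
  by (auto simp: is_word_def)

lemma word_bounds:
  assumes "n > 0" "is_word n u"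
  shows "0 \<le> word_left n u \<and> word_left n u + 1 / real n ^ length u \<le> 1"
  using assms(2)
proof (induction u)
  case Nil then show ?case by simp
next
  case (Cons i u)
  then have i: "1 \<le> i" "i \<le> n" and IH: "0 \<le> word_left n u" "word_left n u + 1 / real n ^ length u \<le> 1"
    by auto
  have "0 \<le> (real i - 1) / real n + word_left n u / real n"
    using i IH assms by (auto intro!: add_nonneg_nonneg divide_nonneg_nonneg)
  moreover have "(real i - 1) / real n + word_left n u / real n + 1 / real n ^ length (i # u)
       = ((real i - 1) + (word_left n u + 1 / real n ^ length u)) / real n"
    using assms by (simp add: field_simps)
  moreover have "((real i - 1) + (word_left n u + 1 / real n ^ length u)) / real n \<le> 1"
    using IH i assms by (simp add: divide_le_eq_1)
  ultimately show ?case by (simp add: wl_Cons)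
qed

lemma phi_sub:
  assumes "n > 0" "is_word n u"
  shows "phi n u \<subseteq> {0..<1}"
  using word_bounds[OF assms] by (auto simp: phi_def)

definition dig :: "nat \<Rightarrow> real \<Rightarrow> nat" where
  "dig n y = nat \<lfloor>real n * y\<rfloor> + 1"

definition wseq :: "nat \<Rightarrow> real \<Rightarrow> nat \<Rightarrow> nat" where
  "wseq n y k = dig n ((fmap n ^^ k) y)"

lemma fmap_range: "fmap n y \<in> {0..<1}"
  by (simp add: fmap_def frac_lt_1)

lemma funpow_fmap_range: "y \<in> {0..<1} \<Longrightarrow> (fmap n ^^ k) y \<in> {0..<1}"
  using fmap_range[of n] by (cases k) auto

lemma dig_range:
  assumes "n > 0" "y \<in> {0..<1}"
  shows "dig n y \<in> {1..n}"
proof -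
  have "0 \<le> real n * y" "real n * y < real n" using assms by auto
  then have "0 \<le> \<lfloor>real n * y\<rfloor>" "\<lfloor>real n * y\<rfloor> < int n"
    by (auto simp: floor_less_iff)
  then show ?thesis by (auto simp: dig_def) linarith
qed

lemma wseq_range: "n > 0 \<Longrightarrow> y \<in> {0..<1} \<Longrightarrow> wseq n y k \<in> {1..n}"
  unfolding wseq_def by (rule dig_range) (use funpow_fmap_range[where n=n and k=k and y=y] in auto)

lemma wseq_Suc: "wseq n y (Suc k) = wseq n (fmap n y) k"
  by (simp add: wseq_def funpow_Suc_right del: funpow.simps)

lemma wseq_0: "wseq n y 0 = dig n y"
  by (simp add: wseq_def)

lemma phi_iff_prefix:
  assumes "n > 0" "is_word n u" "y \<in> {0..<1}"
  shows "y \<in> phi n u \<longleftrightarrow> u = map (wseq n y) [0..<length u]"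
  using assms(2,3)
proof (induction u arbitrary: y)
  case Nil then show ?case by (simp add: phi_def)
next
  case (Cons i u)
  have iu: "1 \<le> i" "i \<le> n" "is_word n u" using Cons.prems by auto
  have key: "y \<in> phi n (i # u) \<longleftrightarrow> i = dig n y \<and> fmap n y \<in> phi n u"
  proof
    assume "y \<in> phi n (i # u)"
    then have m: "real n * y - (real i - 1) \<in> phi n u" using phi_Cons[OF assms(1)] by blast
    then have "real n * y - (real i - 1) \<in> {0..<1}" using phi_sub[OF assms(1) iu(3)] by blast
    then have fl: "\<lfloor>real n * y\<rfloor> = int i - 1"
      by (auto simp: floor_eq_iff)
    then have "i = dig n y" using iu by (simp add: dig_def)
    moreover have "fmap n y = real n * y - (real i - 1)"
      using fl iu by (simp add: fmap_def frac_def)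
    ultimately show "i = dig n y \<and> fmap n y \<in> phi n u" using m by simp
  next
    assume h: "i = dig n y \<and> fmap n y \<in> phi n u"
    have "0 \<le> real n * y" using Cons.prems assms by auto
    then have "fmap n y = real n * y - (real i - 1)"
      using h by (simp add: fmap_def frac_def dig_def)
    then show "y \<in> phi n (i # u)" using h phi_Cons[OF assms(1)] by simp
  qed
  have "(i # u = map (wseq n y) [0..<length (i # u)]) \<longleftrightarrow>
        i = dig n y \<and> u = map (wseq n (fmap n y)) [0..<length u]"
    by (simp only: length_Cons map_upt_Suc wseq_Suc wseq_0 list.inject)
  then show ?case using key Cons.IH[OF iu(3) fmap_range] by simp
qed



lemma adm_words: "admissible n L \<Longrightarrow> u \<in> L \<Longrightarrow> is_word n u"
  by (auto simp: admissible_def)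

lemma adm_partition:
  assumes "n > 0" "admissible n L" "y \<in> {0..<1}"
  shows "\<exists>!u. u \<in> L \<and> y \<in> phi n u"
proof -
  have "\<forall>k. wseq n y k \<in> {1..n}" using wseq_range[OF assms(1,3)] by blast
  then have "\<exists>!u. u \<in> L \<and> u = map (wseq n y) [0..<length u]"
    using assms(2) unfolding admissible_def by blast
  moreover have "\<And>u. u \<in> L \<Longrightarrow> y \<in> phi n u \<longleftrightarrow> u = map (wseq n y) [0..<length u]"
    using phi_iff_prefix[OF assms(1) _ assms(3)] adm_words[OF assms(2)] by blast
  ultimately show ?thesis by metis
qed

lemma adm_disj:
  assumes "n > 0" "admissible n L" "u \<in> L" "v \<in> L" "y \<in> phi n u" "y \<in> phi n v"
  shows "u = v"
proof -
  have "y \<in> {0..<1}" using phi_sub[OF assms(1) adm_words[OF assms(2,3)]] assms(5) by blast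
  then show ?thesis using adm_partition[OF assms(1,2)] assms(3-6) by blast
qed

lemma sword_adj_Cons: "sword_adj n (i # b) = sword_adj n b \<circ> Sadj n i"
  by (simp add: sword_adj_def)

lemma sword_Cons: "sword n (i # a) = Sop n i \<circ> sword n a"
  by (simp add: sword_def)

lemma Sadj_supp: "w \<notin> {0..<1} \<Longrightarrow> Sadj n i h w = 0"
  by (auto simp: Sadj_def)

lemma sword_adj_eq:
  assumes "n > 0" "is_word n b" "\<And>w. w \<notin> {0..<1} \<Longrightarrow> h w = 0"
  shows "sword_adj n b h w = (if 0 \<le> w \<and> w < 1 then h (word_left n b + w / real n ^ length b) else 0)"
  using assms(2,3)
proof (induction b arbitrary: h w)
  case Nil then show ?case by (auto simp: sword_adj_def)
next
  case (Cons i b)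
  have ib: "1 \<le> i" "i \<le> n" "is_word n b" using Cons.prems by auto
  note wb = word_bounds[OF assms(1) ib(3)]
  have IH: "sword_adj n b (Sadj n i h) w = (if 0 \<le> w \<and> w < 1 then Sadj n i h (word_left n b + w / real n ^ length b) else 0)"
    by (rule Cons.IH[OF ib(3)]) (rule Sadj_supp)
  have e: "sword_adj n (i # b) h w = sword_adj n b (Sadj n i h) w"
    by (simp add: sword_adj_Cons)
  show ?case
  proof (cases "0 \<le> w \<and> w < 1")
    case True
    have pos: "0 < real n ^ length b" using assms by simp
    have "0 \<le> w / real n ^ length b" using True pos by simp
    moreover have "w / real n ^ length b < 1 / real n ^ length b"
      using True pos by (simp add: divide_strict_right_mono)
    ultimately have r: "0 \<le> word_left n b + w / real n ^ length b \<and> word_left n b + w / real n ^ length b < 1"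
      using wb by linarith
    have "sword_adj n (i # b) h w = Sadj n i h (word_left n b + w / real n ^ length b)"
      using e IH True by simp
    also have "\<dots> = h ((word_left n b + w / real n ^ length b + real i - 1) / real n)"
      using r unfolding Sadj_def by simp
    also have "(word_left n b + w / real n ^ length b + real i - 1) / real n
        = word_left n (i # b) + w / real n ^ length (i # b)"
      using assms by (simp add: wl_Cons field_simps)
    finally show ?thesis using True by simp
  next
    case False
    then have c: "(0 \<le> w \<and> w < 1) = False" by simp
    show ?thesis by (simp only: e IH c if_False)
  qed
qed

lemma sword_eq:
  assumes "n > 0" "is_word n a" "\<And>w. w \<notin> {0..<1} \<Longrightarrow> k w = 0"
  shows "sword n a k z = (if z \<in> phi n a then k (real n ^ length a * (z - word_left n a)) else 0)"
  using assms(2)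
proof (induction a arbitrary: z)
  case Nil
  show ?case
  proof (cases "z \<in> {0..<1}")
    case True then show ?thesis by (simp add: sword_def phi_def)
  next
    case False then show ?thesis using assms(3)[OF False] by (simp add: sword_def phi_def)
  qed
next
  case (Cons i a)
  have ia: "1 \<le> i" "i \<le> n" "is_word n a" using Cons.prems by auto
  have iff: "z \<in> phi n (i # a) \<longleftrightarrow>
      ((real i - 1) / real n \<le> z \<and> z < real i / real n) \<and> real n * z - (real i - 1) \<in> phi n a"
  proof -
    have "real n * z - (real i - 1) \<in> phi n a \<Longrightarrow> (real i - 1) / real n \<le> z \<and> z < real i / real n"
      using phi_sub[OF assms(1) ia(3)] assms(1) by (auto simp: field_simps)
    then show ?thesis using phi_Cons[OF assms(1)] by blast
  qed
  have arg: "real n ^ length a * (real n * z - (real i - 1) - word_left n a)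
      = real n ^ length (i # a) * (z - word_left n (i # a))"
    using assms(1) by (simp add: wl_Cons field_simps)
  have IH: "sword n a k (real n * z - (real i - 1)) = (if real n * z - (real i - 1) \<in> phi n a
      then k (real n ^ length a * (real n * z - (real i - 1) - word_left n a)) else 0)"
    by (rule Cons.IH[OF ia(3)])
  have e: "sword n (i # a) k z = (if (real i - 1) / real n \<le> z \<and> z < real i / real n
      then sword n a k (real n * z - (real i - 1)) else 0)"
    by (simp add: sword_Cons Sop_def)
  show ?case
  proof (cases "z \<in> phi n (i # a)")
    case True
    then show ?thesis using iff e IH arg by simp
  next
    case False
    then show ?thesis using iff e IH by auto
  qed
qed

definition aff :: "nat \<Rightarrow> nat list \<Rightarrow> nat list \<Rightarrow> real \<Rightarrow> real" where
  "aff n a b y = word_left n a + (y - word_left n b) * real n ^ length b / real n ^ length a"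

definition ainv :: "nat \<Rightarrow> nat list \<Rightarrow> nat list \<Rightarrow> real \<Rightarrow> real" where
  "ainv n a b z = word_left n b + real n ^ length a * (z - word_left n a) / real n ^ length b"

lemma aff_ainv: "n > 0 \<Longrightarrow> aff n a b (ainv n a b z) = z"
  by (simp add: aff_def ainv_def field_simps)

lemma ainv_aff: "n > 0 \<Longrightarrow> ainv n a b (aff n a b y) = y"
  by (simp add: aff_def ainv_def field_simps)

lemma scale_unit:
  assumes "n > 0" "0 \<le> t" "t < 1 / real n ^ m"
  shows "0 \<le> t * real n ^ m / real n ^ k \<and> t * real n ^ m / real n ^ k < 1 / real n ^ k"
proof -
  have p: "0 < real n ^ m" "0 < real n ^ k" using assms by auto
  have "t * real n ^ m < 1" using assms(3) p by (simp add: field_simps)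
  then show ?thesis using p assms(2) by (simp add: divide_strict_right_mono)
qed

lemma aff_phi: "n > 0 \<Longrightarrow> y \<in> phi n b \<Longrightarrow> aff n a b y \<in> phi n a"
  using scale_unit[of n "y - word_left n b" "length b" "length a"]
  by (auto simp: aff_def phi_def)

lemma ainv_phi: "n > 0 \<Longrightarrow> z \<in> phi n a \<Longrightarrow> ainv n a b z \<in> phi n b"
  using scale_unit[of n "z - word_left n a" "length a" "length b"]
  by (auto simp: ainv_def phi_def mult.commute)

lemma term_eq:
  assumes "n > 0" "is_word n a" "is_word n b" "\<And>w. w \<notin> {0..<1} \<Longrightarrow> h w = 0"
  shows "sword n a (sword_adj n b h) z = (if z \<in> phi n a then h (ainv n a b z) else 0)"
proof -
  have supp: "\<And>w. w \<notin> {0..<1} \<Longrightarrow> sword_adj n b h w = 0"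
    using sword_adj_eq[OF assms(1,3,4)] by auto
  have s1: "sword n a (sword_adj n b h) z = (if z \<in> phi n a then sword_adj n b h (real n ^ length a * (z - word_left n a)) else 0)"
    by (rule sword_eq[OF assms(1,2) supp])
  show ?thesis
  proof (cases "z \<in> phi n a")
    case True
    then have r: "0 \<le> real n ^ length a * (z - word_left n a) \<and> real n ^ length a * (z - word_left n a) < 1"
      using assms(1) by (auto simp: phi_def field_simps)
    have "sword_adj n b h (real n ^ length a * (z - word_left n a)) = h (ainv n a b z)"
      using sword_adj_eq[OF assms(1,3,4), where w="real n ^ length a * (z - word_left n a)"] r by (simp add: ainv_def)
    then show ?thesis using s1 True by simp
  next
    case False then show ?thesis using s1 by simp
  qed
qed

lemma sum_list_single:
  fixes F :: "'a \<Rightarrow> 'b::comm_monoid_add"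
  assumes "distinct ps" "p0 \<in> set ps" "\<And>p. p \<in> set ps \<Longrightarrow> p \<noteq> p0 \<Longrightarrow> F p = 0"
  shows "sum_list (map F ps) = F p0"
proof -
  have "sum_list (map F ps) = sum F (set ps)" using assms(1) by (simp add: sum_list_distinct_conv_sum_set)
  also have "\<dots> = sum F {p0}" using assms(2,3) by (intro sum.mono_neutral_right) auto
  also have "\<dots> = F p0" by simp
  finally show ?thesis .
qed

lemma sum_list_zero:
  fixes F :: "'a \<Rightarrow> 'b::comm_monoid_add"
  assumes "\<And>p. p \<in> set ps \<Longrightarrow> F p = 0"
  shows "sum_list (map F ps) = 0"
  using assms by (induction ps) auto

lemma Psi_eq:
  assumes "n > 0" "Vwitness n g ps" "bij_betw g {0..<1} {0..<1}" "\<And>w. w \<notin> {0..<1} \<Longrightarrow> h w = 0"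
  shows "Psi_op n ps h = (\<lambda>z. if z \<in> {0..<1} then h (inv_into {0..<1} g z) else 0)"
proof
  fix z
  have d1: "distinct (map fst ps)" and a1: "admissible n (set (map fst ps))"
    and a2: "admissible n (set (map snd ps))"
    using assms(2) unfolding Vwitness_def by auto
  have gw: "\<And>a b y. (a,b) \<in> set ps \<Longrightarrow> y \<in> phi n b \<Longrightarrow> g y = aff n a b y"
    using assms(2) unfolding Vwitness_def aff_def by fast
  have dps: "distinct ps" using d1 distinct_map by blast
  have wa: "\<And>a b. (a,b) \<in> set ps \<Longrightarrow> is_word n a \<and> is_word n b"
  proof -
    fix a b assume "(a,b) \<in> set ps"
    then have "a \<in> set (map fst ps)" "b \<in> set (map snd ps)" by force+
    then show "is_word n a \<and> is_word n b" using adm_words[OF a1] adm_words[OF a2] by blast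
  qed
  define F where "F = (\<lambda>(a,b). sword n a (sword_adj n b h) z)"
  have P: "Psi_op n ps h z = sum_list (map F ps)" by (simp add: Psi_op_def F_def)
  have tm: "\<And>a b. (a,b) \<in> set ps \<Longrightarrow> F (a,b) = (if z \<in> phi n a then h (ainv n a b z) else 0)"
    unfolding F_def using term_eq[OF assms(1) _ _ assms(4)] wa by simp
  show "Psi_op n ps h z = (if z \<in> {0..<1} then h (inv_into {0..<1} g z) else 0)"
  proof (cases "z \<in> {0..<1}")
    case False
    have "\<And>p. p \<in> set ps \<Longrightarrow> F p = 0"
    proof -
      fix p assume p: "p \<in> set ps"
      obtain a b where ab: "p = (a,b)" by (cases p)
      have "z \<notin> phi n a" using phi_sub[OF assms(1)] wa p ab False by blast
      then show "F p = 0" using tm p ab by simp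
    qed
    then have "sum_list (map F ps) = 0" by (rule sum_list_zero)
    then show ?thesis using P False by auto
  next
    case True
    obtain a where a: "a \<in> set (map fst ps)" "z \<in> phi n a"
      using adm_partition[OF assms(1) a1 True] by blast
    then obtain b where ab: "(a,b) \<in> set ps" by auto
    have oth: "\<And>p. p \<in> set ps \<Longrightarrow> p \<noteq> (a,b) \<Longrightarrow> F p = 0"
    proof -
      fix p assume p: "p \<in> set ps" "p \<noteq> (a,b)"
      obtain a' b' where pp: "p = (a',b')" by (cases p)
      have "z \<notin> phi n a'"
      proof
        assume h: "z \<in> phi n a'"
        have "a' \<in> set (map fst ps)" using p pp by force
        then have "a' = a" using adm_disj[OF assms(1) a1 _ a(1) h a(2)] by blast
        then show False using p pp ab d1 by (metis eq_key_imp_eq_value)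
      qed
      then show "F p = 0" using tm p pp by simp
    qed
    have "Psi_op n ps h z = F (a,b)" unfolding P by (rule sum_list_single[OF dps ab oth])
    also have "\<dots> = h (ainv n a b z)" using tm[OF ab] a(2) by simp
    also have "ainv n a b z = inv_into {0..<1} g z"
    proof -
      have yb: "ainv n a b z \<in> phi n b" using ainv_phi[OF assms(1) a(2)] .
      then have "g (ainv n a b z) = z" using gw[OF ab yb] aff_ainv[OF assms(1)] by simp
      moreover have "ainv n a b z \<in> {0..<1}" using yb phi_sub[OF assms(1)] wa[OF ab] by blast
      ultimately show ?thesis using assms(3) by (metis bij_betw_imp_inj_on inv_into_f_f)
    qed
    finally show ?thesis using True by simp
  qed
qed

lemma rho_eq:
  assumes "n > 0" "g \<in> Vn n" "\<And>w. w \<notin> {0..<1} \<Longrightarrow> h w = 0"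
  shows "rho n g h = (\<lambda>z. if z \<in> {0..<1} then h (inv_into {0..<1} g z) else 0)"
proof -
  have ex: "\<exists>ps. Vwitness n g ps" and bij: "bij_betw g {0..<1} {0..<1}" using assms(2) by (auto simp: Vn_def)
  have w: "Vwitness n g (SOME ps. Vwitness n g ps)" using someI_ex[OF ex] .
  show ?thesis unfolding rho_def by (rule Psi_eq[OF assms(1) w bij assms(3)])
qed



definition gfun :: "nat \<Rightarrow> (nat list \<times> nat list) list \<Rightarrow> real \<Rightarrow> real" where
  "gfun n ps y = sum_list (map (\<lambda>(a,b). if y \<in> phi n b then aff n a b y else 0) ps)"

locale codepair =
  fixes n :: nat and ps :: "(nat list \<times> nat list) list"
  assumes npos: "n > 0"
    and d1: "distinct (map fst ps)" and d2: "distinct (map snd ps)"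
    and a1: "admissible n (set (map fst ps))" and a2: "admissible n (set (map snd ps))"
begin

lemma dps: "distinct ps" using d1 distinct_map by blast

lemma wa: "(a,b) \<in> set ps \<Longrightarrow> is_word n a \<and> is_word n b"
proof -
  assume "(a,b) \<in> set ps"
  then have "a \<in> set (map fst ps)" "b \<in> set (map snd ps)" by force+
  then show "is_word n a \<and> is_word n b" using adm_words[OF a1] adm_words[OF a2] by blast
qed

lemma snd_inj: "(a,b) \<in> set ps \<Longrightarrow> (a',b) \<in> set ps \<Longrightarrow> a = a'"
proof -
  assume h: "(a,b) \<in> set ps" "(a',b) \<in> set ps"
  have "inj_on snd (set ps)" using d2 by (simp add: distinct_map)
  then show "a = a'" using h by (metis inj_on_eq_iff prod.inject snd_conv)
qed

lemma fst_inj: "(a,b) \<in> set ps \<Longrightarrow> (a,b') \<in> set ps \<Longrightarrow> b = b'"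
proof -
  assume h: "(a,b) \<in> set ps" "(a,b') \<in> set ps"
  have "inj_on fst (set ps)" using d1 by (simp add: distinct_map)
  then show "b = b'" using h by (metis inj_on_eq_iff prod.inject fst_conv)
qed

lemma gfun_on:
  assumes ab: "(a,b) \<in> set ps" and y: "y \<in> phi n b"
  shows "gfun n ps y = aff n a b y"
proof -
  define F where "F = (\<lambda>(a,b). if y \<in> phi n b then aff n a b y else 0)"
  have oth: "\<And>p. p \<in> set ps \<Longrightarrow> p \<noteq> (a,b) \<Longrightarrow> F p = 0"
  proof -
    fix p assume p: "p \<in> set ps" "p \<noteq> (a,b)"
    obtain a' b' where pp: "p = (a',b')" by (cases p)
    have "y \<notin> phi n b'"
    proof
      assume h: "y \<in> phi n b'"
      have "b' \<in> set (map snd ps)" "b \<in> set (map snd ps)" using p pp ab by force+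
      then have "b' = b" using adm_disj[OF npos a2 _ _ h y] by blast
      then show False using p pp ab snd_inj by blast
    qed
    then show "F p = 0" using pp by (simp add: F_def)
  qed
  have "gfun n ps y = sum_list (map F ps)" by (simp add: gfun_def F_def)
  also have "\<dots> = F (a,b)" by (rule sum_list_single[OF dps ab oth])
  also have "\<dots> = aff n a b y" using y by (simp add: F_def)
  finally show ?thesis .
qed

lemma cover_snd: "y \<in> {0..<1} \<Longrightarrow> \<exists>a b. (a,b) \<in> set ps \<and> y \<in> phi n b"
proof -
  assume "y \<in> {0..<1}"
  then obtain b where "b \<in> set (map snd ps)" "y \<in> phi n b" using adm_partition[OF npos a2] by blast
  then show ?thesis by force
qed

lemma cover_fst: "z \<in> {0..<1} \<Longrightarrow> \<exists>a b. (a,b) \<in> set ps \<and> z \<in> phi n a"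
proof -
  assume "z \<in> {0..<1}"
  then obtain a where "a \<in> set (map fst ps)" "z \<in> phi n a" using adm_partition[OF npos a1] by blast
  then show ?thesis by force
qed

lemma gfun_bij: "bij_betw (gfun n ps) {0..<1} {0..<1}"
proof (rule bij_betw_imageI)
  show "inj_on (gfun n ps) {0..<1}"
  proof (rule inj_onI)
    fix y1 y2 assume y: "y1 \<in> {0..<1}" "y2 \<in> {0..<1}" "gfun n ps y1 = gfun n ps y2"
    obtain a1 b1 where p1: "(a1,b1) \<in> set ps" "y1 \<in> phi n b1" using cover_snd y(1) by blast
    obtain a2 b2 where p2: "(a2,b2) \<in> set ps" "y2 \<in> phi n b2" using cover_snd y(2) by blast
    have e: "aff n a1 b1 y1 = aff n a2 b2 y2" using y(3) gfun_on[OF p1] gfun_on[OF p2] by simp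
    have "aff n a1 b1 y1 \<in> phi n a1" "aff n a2 b2 y2 \<in> phi n a2" using aff_phi[OF npos] p1 p2 by blast+
    moreover have "a1 \<in> set (map fst ps)" "a2 \<in> set (map fst ps)" using p1 p2 by force+
    ultimately have "a1 = a2" using adm_disj[OF npos a1] e by metis
    moreover then have "b1 = b2" using p1 p2 fst_inj by blast
    ultimately show "y1 = y2" using e ainv_aff[OF npos] by metis
  qed
  show "gfun n ps ` {0..<1} = {0..<1}"
  proof
    show "gfun n ps ` {0..<1} \<subseteq> {0..<1}"
    proof
      fix z assume "z \<in> gfun n ps ` {0..<1}"
      then obtain y where y: "y \<in> {0..<1}" "z = gfun n ps y" by blast
      obtain a b where p: "(a,b) \<in> set ps" "y \<in> phi n b" using cover_snd y(1) by blast
      have "z \<in> phi n a" using y(2) gfun_on[OF p] aff_phi[OF npos p(2)] by simp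
      then show "z \<in> {0..<1}" using phi_sub[OF npos] wa[OF p(1)] by blast
    qed
    show "{0..<1} \<subseteq> gfun n ps ` {0..<1}"
    proof
      fix z :: real assume z: "z \<in> {0..<1}"
      obtain a b where p: "(a,b) \<in> set ps" "z \<in> phi n a" using cover_fst z by blast
      have yb: "ainv n a b z \<in> phi n b" using ainv_phi[OF npos p(2)] .
      have "gfun n ps (ainv n a b z) = z" using gfun_on[OF p(1) yb] aff_ainv[OF npos] by simp
      moreover have "ainv n a b z \<in> {0..<1}" using yb phi_sub[OF npos] wa[OF p(1)] by blast
      ultimately show "z \<in> gfun n ps ` {0..<1}" by (metis image_eqI)
    qed
  qed
qed

lemma gfun_Vn: "gfun n ps \<in> Vn n"
proof -
  have "Vwitness n (gfun n ps) ps"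
    unfolding Vwitness_def using d1 d2 a1 a2 gfun_on by (auto simp: aff_def)
  then show ?thesis using gfun_bij by (auto simp: Vn_def)
qed

end



lemma funpow_phi:
  assumes "n > 0" "is_word n u" "y \<in> phi n u"
  shows "(fmap n ^^ length u) y = real n ^ length u * (y - word_left n u)"
  using assms(2,3)
proof (induction u arbitrary: y)
  case Nil then show ?case by simp
next
  case (Cons i u)
  have iu: "is_word n u" using Cons.prems by simp
  have m: "real n * y - (real i - 1) \<in> phi n u" using Cons.prems(2) phi_Cons[OF assms(1)] by blast
  then have "real n * y - (real i - 1) \<in> {0..<1}" using phi_sub[OF assms(1) iu] by blast
  then have fl: "\<lfloor>real n * y\<rfloor> = int i - 1" by (auto simp: floor_eq_iff)
  have i1: "1 \<le> i" using Cons.prems by simp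
  have fy: "fmap n y = real n * y - (real i - 1)"
    using fl i1 by (simp add: fmap_def frac_def)
  have "(fmap n ^^ length (i # u)) y = (fmap n ^^ length u) (fmap n y)"
    by (simp add: funpow_Suc_right del: funpow.simps)
  also have "\<dots> = real n ^ length u * (real n * y - (real i - 1) - word_left n u)"
    using Cons.IH[OF iu] m fy by simp
  also have "\<dots> = real n ^ length (i # u) * (y - word_left n (i # u))"
    using assms(1) by (simp add: wl_Cons field_simps)
  finally show ?case .
qed

definition orel :: "nat \<Rightarrow> real \<Rightarrow> real \<Rightarrow> bool" where
  "orel n y z \<longleftrightarrow> (\<exists>p q. (fmap n ^^ p) y = (fmap n ^^ q) z)"

lemma orel_refl: "orel n y y" by (auto simp: orel_def)

lemma orel_sym: "orel n y z \<Longrightarrow> orel n z y" unfolding orel_def by metis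

lemma funpow_comm: "(f ^^ a) ((f ^^ b) y) = (f ^^ b) ((f ^^ a) y)"
  by (metis add.commute comp_apply funpow_add)

lemma orel_trans:
  assumes "orel n y z" "orel n z w" shows "orel n y w"
proof -
  obtain p q where 1: "(fmap n ^^ p) y = (fmap n ^^ q) z" using assms(1) by (auto simp: orel_def)
  obtain r s where 2: "(fmap n ^^ r) z = (fmap n ^^ s) w" using assms(2) by (auto simp: orel_def)
  have "(fmap n ^^ (r + p)) y = (fmap n ^^ r) ((fmap n ^^ q) z)" by (simp add: funpow_add 1)
  also have "\<dots> = (fmap n ^^ q) ((fmap n ^^ s) w)" by (simp add: funpow_comm 2)
  also have "\<dots> = (fmap n ^^ (q + s)) w" by (simp add: funpow_add)
  finally show ?thesis by (auto simp: orel_def)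
qed

lemma orb_alt: "orb n x = {y \<in> {0..<1}. orel n y x}"
  by (simp add: orb_def orel_def)

lemma orb_self: "x \<in> {0..<1} \<Longrightarrow> x \<in> orb n x"
  by (simp add: orb_alt orel_refl)

lemma orb_sub: "orb n x \<subseteq> {0..<1}" by (auto simp: orb_alt)

lemma orb_eq_iff:
  assumes "x \<in> {0..<1}" "y \<in> {0..<1}"
  shows "orb n x = orb n y \<longleftrightarrow> orel n x y"
proof
  assume "orb n x = orb n y"
  then have "x \<in> orb n y" using orb_self[OF assms(1), of n] by simp
  then show "orel n x y" by (simp add: orb_alt)
next
  assume h: "orel n x y"
  show "orb n x = orb n y"
    unfolding orb_alt using h orel_sym orel_trans by blast
qed

lemma Vn_range: "g \<in> Vn n \<Longrightarrow> y \<in> {0..<1} \<Longrightarrow> g y \<in> {0..<1}"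
  by (auto simp: Vn_def bij_betw_def)

lemma Vn_orel:
  assumes "n > 0" "g \<in> Vn n" "y \<in> {0..<1}"
  shows "orel n (g y) y"
proof -
  obtain ps where w: "Vwitness n g ps" using assms(2) by (auto simp: Vn_def)
  have a1: "admissible n (set (map fst ps))" and a2: "admissible n (set (map snd ps))"
    using w unfolding Vwitness_def by auto
  have gw: "\<And>a b y. (a,b) \<in> set ps \<Longrightarrow> y \<in> phi n b \<Longrightarrow> g y = aff n a b y"
    using w unfolding Vwitness_def aff_def by fast
  obtain b where b: "b \<in> set (map snd ps)" "y \<in> phi n b" using adm_partition[OF assms(1) a2 assms(3)] by blast
  then obtain a where ab: "(a,b) \<in> set ps" by auto
  have wa: "is_word n a" "is_word n b" using ab adm_words[OF a1] adm_words[OF a2] by force+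
  have gy: "g y = aff n a b y" using gw[OF ab b(2)] .
  have ga: "g y \<in> phi n a" using gy aff_phi[OF assms(1) b(2)] by simp
  have "(fmap n ^^ length a) (g y) = real n ^ length a * (g y - word_left n a)"
    using funpow_phi[OF assms(1) wa(1) ga] .
  also have "\<dots> = real n ^ length b * (y - word_left n b)"
    using assms(1) by (simp add: gy aff_def field_simps)
  also have "\<dots> = (fmap n ^^ length b) y" using funpow_phi[OF assms(1) wa(2) b(2)] by simp
  finally show ?thesis by (auto simp: orel_def)
qed

lemma Vn_orb:
  assumes "n > 0" "g \<in> Vn n" "y \<in> {0..<1}"
  shows "g y \<in> orb n x \<longleftrightarrow> y \<in> orb n x"
  using Vn_orel[OF assms] Vn_range[OF assms(2,3)] assms(3) orel_sym orel_trans
  unfolding orb_alt by blast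

section \<open>Level languages\<close>

definition Lev :: "nat \<Rightarrow> nat \<Rightarrow> nat list set" where
  "Lev n M = {u. length u = M \<and> is_word n u}"

lemma Lev_alt: "Lev n M = {xs. set xs \<subseteq> {1..n} \<and> length xs = M}"
  by (auto simp: Lev_def is_word_def)

lemma Lev_finite: "finite (Lev n M)"
  unfolding Lev_alt by (rule finite_lists_length_eq) simp

lemma Lev_card: "card (Lev n M) = n ^ M"
  unfolding Lev_alt by (subst card_lists_length_eq) simp_all

lemma Lev_adm: "admissible n (Lev n M)"
  unfolding admissible_def
proof (intro conjI allI impI ballI)
  show "finite (Lev n M)" by (rule Lev_finite)
  show "\<And>u. u \<in> Lev n M \<Longrightarrow> is_word n u" by (simp add: Lev_def)
  fix w :: "nat \<Rightarrow> nat" assume w: "\<forall>k. w k \<in> {1..n}"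
  have "map w [0..<M] \<in> Lev n M" using w by (auto simp: Lev_def is_word_def)
  then show "\<exists>!u. u \<in> Lev n M \<and> u = map w [0..<length u]"
    by (intro ex1I[of _ "map w [0..<M]"]) (auto simp: Lev_def)
qed

lemma prefix_Lev:
  assumes "n > 0" "y \<in> {0..<1}"
  shows "map (wseq n y) [0..<M] \<in> Lev n M \<and> y \<in> phi n (map (wseq n y) [0..<M])"
proof -
  have w: "is_word n (map (wseq n y) [0..<M])" using wseq_range[OF assms] by (auto simp: is_word_def)
  then show ?thesis using phi_iff_prefix[OF assms(1) w assms(2)] by (simp add: Lev_def)
qed

lemma wl_in_phi: "n > 0 \<Longrightarrow> word_left n u \<in> phi n u"
  by (simp add: phi_def)



lemma map_upt_snoc: "map w [0..<Suc m] = map w [0..<m] @ [w m]"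
  by simp

lemma split_adm:
  assumes npos: "n > 0" and adm: "admissible n L" and c: "c \<in> L"
  shows "admissible n ((L - {c}) \<union> (\<lambda>i. c @ [i]) ` {1..n})"
  unfolding admissible_def
proof (intro conjI allI impI ballI)
  have fin: "finite L" using adm by (simp add: admissible_def)
  then show "finite ((L - {c}) \<union> (\<lambda>i. c @ [i]) ` {1..n})" by simp
  have cw: "is_word n c" using adm c by (simp add: admissible_def)
  show "\<And>u. u \<in> (L - {c}) \<union> (\<lambda>i. c @ [i]) ` {1..n} \<Longrightarrow> is_word n u"
  proof -
    fix u assume u: "u \<in> (L - {c}) \<union> (\<lambda>i. c @ [i]) ` {1..n}"
    show "is_word n u"
    proof (cases "u \<in> L")
      case True then show ?thesis using adm_words[OF adm] by blast
    next
      case False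
      then obtain i where "i \<in> {1..n}" "u = c @ [i]" using u by blast
      then show ?thesis using cw by (simp add: is_word_def)
    qed
  qed
  fix w :: "nat \<Rightarrow> nat" assume w: "\<forall>k. w k \<in> {1..n}"
  then have ex: "\<exists>!u. u \<in> L \<and> u = map w [0..<length u]" using adm by (simp add: admissible_def)
  then obtain u0 where u0: "u0 \<in> L" "u0 = map w [0..<length u0]" by blast
  have uq: "\<And>v. v \<in> L \<Longrightarrow> v = map w [0..<length v] \<Longrightarrow> v = u0"
    using ex u0 by blast
  have capp: "\<And>i. (c @ [i] = map w [0..<length (c @ [i])]) \<longleftrightarrow> c = map w [0..<length c] \<and> i = w (length c)"
  proof -
    fix i
    have "map w [0..<length (c @ [i])] = map w [0..<length c] @ [w (length c)]" by simp
    then show "(c @ [i] = map w [0..<length (c @ [i])]) \<longleftrightarrow> c = map w [0..<length c] \<and> i = w (length c)"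
      by simp
  qed
  show "\<exists>!u. u \<in> (L - {c}) \<union> (\<lambda>i. c @ [i]) ` {1..n} \<and> u = map w [0..<length u]"
  proof (cases "u0 = c")
    case False
    show ?thesis
    proof (rule ex1I[of _ u0])
      show "u0 \<in> (L - {c}) \<union> (\<lambda>i. c @ [i]) ` {1..n} \<and> u0 = map w [0..<length u0]"
        using u0 False by simp
      fix v assume v: "v \<in> (L - {c}) \<union> (\<lambda>i. c @ [i]) ` {1..n} \<and> v = map w [0..<length v]"
      show "v = u0"
      proof (cases "v \<in> L - {c}")
        case True then show ?thesis using uq v by blast
      next
        case False
        then obtain i where "v = c @ [i]" using v by blast
        then have "c = map w [0..<length c]" using capp v by blast
        then have "c = u0" using uq c by blast
        then show ?thesis using \<open>u0 \<noteq> c\<close> by simp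
      qed
    qed
  next
    case True
    show ?thesis
    proof (rule ex1I[of _ "c @ [w (length c)]"])
      show "c @ [w (length c)] \<in> (L - {c}) \<union> (\<lambda>i. c @ [i]) ` {1..n} \<and>
            c @ [w (length c)] = map w [0..<length (c @ [w (length c)])]"
        using capp True u0 w by auto
      fix v assume v: "v \<in> (L - {c}) \<union> (\<lambda>i. c @ [i]) ` {1..n} \<and> v = map w [0..<length v]"
      show "v = c @ [w (length c)]"
      proof (cases "v \<in> L - {c}")
        case True then show ?thesis using uq v \<open>u0 = c\<close> by blast
      next
        case False
        then obtain i where "v = c @ [i]" using v by blast
        then show ?thesis using capp v by blast
      qed
    qed
  qed
qed

lemma adm_no_ext:
  assumes npos: "n > 0" and adm: "admissible n L" and c: "c \<in> L" and i: "i \<in> {1..n}"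
  shows "c @ [i] \<notin> L"
proof
  assume ci: "c @ [i] \<in> L"
  have cw: "is_word n c" using adm c by (simp add: admissible_def)
  define w where "w = (\<lambda>k. if k < length c then c ! k else if k = length c then i else 1)"
  have wr: "\<forall>k. w k \<in> {1..n}"
  proof
    fix k
    show "w k \<in> {1..n}"
    proof (cases "k < length c")
      case True
      then have "c ! k \<in> set c" by (rule nth_mem)
      then have "c ! k \<in> {1..n}" using cw unfolding is_word_def by blast
      then show ?thesis using True by (simp add: w_def)
    qed (use i npos in \<open>auto simp: w_def\<close>)
  qed
  have p1: "c = map w [0..<length c]" by (rule nth_equalityI) (simp_all add: w_def)
  have p2: "c @ [i] = map w [0..<length (c @ [i])]" using p1 by (simp add: w_def)
  have "\<exists>!u. u \<in> L \<and> u = map w [0..<length u]" using adm wr by (simp add: admissible_def)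
  then have "c = c @ [i]" using p1 p2 c ci by blast
  then show False by simp
qed

lemma split_card:
  assumes npos: "n > 0" and adm: "admissible n L" and c: "c \<in> L"
  shows "card ((L - {c}) \<union> (\<lambda>i. c @ [i]) ` {1..n}) = card L + (n - 1)"
proof -
  have fin: "finite L" using adm by (simp add: admissible_def)
  have disj: "(L - {c}) \<inter> (\<lambda>i. c @ [i]) ` {1..n} = {}" using adm_no_ext[OF npos adm c] by blast
  have ci: "card ((\<lambda>i. c @ [i]) ` {1..n}) = n" by (subst card_image) (auto simp: inj_on_def)
  have "card ((L - {c}) \<union> (\<lambda>i. c @ [i]) ` {1..n}) = card (L - {c}) + n"
    using disj fin ci by (simp add: card_Un_disjoint)
  also have "card (L - {c}) = card L - 1" using fin c by simp
  finally show ?thesis using c fin npos card_gt_0_iff[of L] by force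
qed

lemma grow:
  assumes npos: "n > 0" and adm: "admissible n L" and b: "b \<in> L" and c: "c \<in> L" "c \<noteq> b"
  shows "\<exists>L'. admissible n L' \<and> b \<in> L' \<and> card L' = card L + k * (n - 1) \<and> (\<exists>c'\<in>L'. c' \<noteq> b)"
proof (induction k)
  case 0 then show ?case using adm b c by auto
next
  case (Suc k)
  then obtain L' c' where L': "admissible n L'" "b \<in> L'" "card L' = card L + k * (n - 1)" "c' \<in> L'" "c' \<noteq> b"
    by blast
  define L'' where "L'' = (L' - {c'}) \<union> (\<lambda>i. c' @ [i]) ` {1..n}"
  have "admissible n L''" unfolding L''_def by (rule split_adm[OF npos L'(1,4)])
  moreover have "b \<in> L''" using L' by (simp add: L''_def)
  moreover have "card L'' = card L + Suc k * (n - 1)"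
    using split_card[OF npos L'(1,4)] L'(3) by (simp add: L''_def)
  moreover have "c' @ [1] \<in> L''" "c' @ [1] \<noteq> b"
    using npos adm_no_ext[OF npos L'(1,4), of 1] L'(2) by (auto simp: L''_def)
  ultimately show ?case by blast
qed

lemma pow_gap: "(n::nat) > 0 \<Longrightarrow> \<exists>k. n ^ (P + d) = n ^ P + k * (n - 1)"
proof (induction d)
  case 0 show ?case by (rule exI[of _ 0]) simp
next
  case (Suc d)
  then obtain k where k: "n ^ (P + d) = n ^ P + k * (n - 1)" by blast
  have "n ^ (P + Suc d) = n ^ (P + d) + (n - 1) * n ^ (P + d)"
    using Suc.prems by (simp add: algebra_simps)
  then have "n ^ (P + Suc d) = n ^ P + (k + n ^ (P + d)) * (n - 1)" using k by (simp add: algebra_simps)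
  then show ?case by blast
qed

lemma Lev_two:
  assumes "n \<ge> 2" "P \<ge> 1" "b \<in> Lev n P"
  shows "\<exists>c\<in>Lev n P. c \<noteq> b"
proof -
  have "n ^ 1 \<le> n ^ P" using assms by (intro power_increasing) auto
  then have "n ^ P \<ge> 2" using assms by simp
  then have "card (Lev n P) \<ge> 2" by (simp add: Lev_card)
  then have "card (Lev n P - {b}) \<ge> 1" using assms(3) Lev_finite by simp
  then have "Lev n P - {b} \<noteq> {}" by (metis card.empty not_one_le_zero)
  then show ?thesis by blast
qed

lemma pair_code:
  assumes npos: "n > 0" and A1: "admissible n L1" and A2: "admissible n L2"
    and b: "b \<in> L1" and a: "a \<in> L2" and cd: "card L1 = card L2"
  shows "\<exists>ps. codepair n ps \<and> (a,b) \<in> set ps"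
proof -
  have f1: "finite L1" "finite L2" using A1 A2 by (auto simp: admissible_def)
  obtain xs where xs: "set xs = L1 - {b}" "distinct xs" using finite_distinct_list[of "L1 - {b}"] f1 by auto
  obtain ys where ys: "set ys = L2 - {a}" "distinct ys" using finite_distinct_list[of "L2 - {a}"] f1 by auto
  have "length xs = card L1 - 1" using xs f1 b by (simp add: distinct_card[symmetric])
  moreover have "length ys = card L2 - 1" using ys f1 a by (simp add: distinct_card[symmetric])
  ultimately have len: "length xs = length ys" using cd by simp
  define ps where "ps = (a,b) # zip ys xs"
  have m1: "map fst ps = a # ys" and m2: "map snd ps = b # xs" using len by (simp_all add: ps_def)
  have "codepair n ps"
    unfolding codepair_def m1 m2 using npos xs ys a b A1 A2
    by (simp add: insert_absorb)
  then show ?thesis by (auto simp: ps_def)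
qed



lemma trans_V:
  assumes n2: "n \<ge> 2" and x: "x \<in> {0..<1}" and w: "w \<in> orb n x"
  shows "\<exists>g\<in>Vn n. g x = w"
proof -
  have npos: "n > 0" using n2 by simp
  have w01: "w \<in> {0..<1}" and "orel n w x" using w by (auto simp: orb_alt)
  then obtain p q where pq: "(fmap n ^^ p) w = (fmap n ^^ q) x" by (auto simp: orel_def)
  define P where "P = Suc q"
  define Q where "Q = Suc p"
  have PQ: "(fmap n ^^ P) x = (fmap n ^^ Q) w" using pq by (simp add: P_def Q_def)
  define b where "b = map (wseq n x) [0..<P]"
  define a where "a = map (wseq n w) [0..<Q]"
  have b: "b \<in> Lev n P" "x \<in> phi n b" using prefix_Lev[OF npos x] by (simp_all add: b_def)
  have a: "a \<in> Lev n Q" "w \<in> phi n a" using prefix_Lev[OF npos w01] by (simp_all add: a_def)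
  have lb: "length b = P" and la: "length a = Q" by (simp_all add: a_def b_def)
  have wb: "is_word n b" and wa: "is_word n a" using a b by (auto simp: Lev_def)
  have "\<exists>L1 L2. admissible n L1 \<and> admissible n L2 \<and> b \<in> L1 \<and> a \<in> L2 \<and> card L1 = card L2"
  proof (cases "P \<le> Q")
    case True
    obtain k where k: "n ^ (P + (Q - P)) = n ^ P + k * (n - 1)" using pow_gap[OF npos] by blast
    obtain c where c: "c \<in> Lev n P" "c \<noteq> b" using Lev_two[OF n2 _ b(1)] by (auto simp: P_def)
    obtain L1 where L1: "admissible n L1" "b \<in> L1" "card L1 = card (Lev n P) + k * (n - 1)"
      using grow[OF npos Lev_adm b(1) c, of k] by blast
    have "card L1 = card (Lev n Q)" using L1(3) k True by (simp add: Lev_card)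
    then show ?thesis using L1 Lev_adm a(1) by blast
  next
    case False
    obtain k where k: "n ^ (Q + (P - Q)) = n ^ Q + k * (n - 1)" using pow_gap[OF npos] by blast
    obtain c where c: "c \<in> Lev n Q" "c \<noteq> a" using Lev_two[OF n2 _ a(1)] by (auto simp: Q_def)
    obtain L2 where L2: "admissible n L2" "a \<in> L2" "card L2 = card (Lev n Q) + k * (n - 1)"
      using grow[OF npos Lev_adm a(1) c, of k] by blast
    have "card L2 = card (Lev n P)" using L2(3) k False by (simp add: Lev_card)
    then show ?thesis using L2 Lev_adm b(1) by metis
  qed
  then obtain L1 L2 where L: "admissible n L1" "admissible n L2" "b \<in> L1" "a \<in> L2" "card L1 = card L2"
    by blast
  obtain ps where ps: "codepair n ps" "(a,b) \<in> set ps" using pair_code[OF npos L] by blast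
  have gV: "gfun n ps \<in> Vn n" by (rule codepair.gfun_Vn[OF ps(1)])
  have "gfun n ps x = aff n a b x" by (rule codepair.gfun_on[OF ps(1) ps(2) b(2)])
  also have "\<dots> = word_left n a + (fmap n ^^ P) x / real n ^ Q"
    using funpow_phi[OF npos wb b(2)] lb la by (simp add: aff_def mult.commute)
  also have "\<dots> = w"
    using PQ funpow_phi[OF npos wa a(2)] la npos by simp
  finally show ?thesis using gV by blast
qed

lemma lev_swap:
  assumes npos: "n > 0" and d: "d \<in> Lev n M" and e: "e \<in> Lev n M"
  shows "\<exists>g\<in>Vn n. \<forall>u\<in>Lev n M. \<forall>y\<in>phi n u.
           g y = word_left n (if u = d then e else if u = e then d else u) + (y - word_left n u)"
proof -
  define \<sigma> where "\<sigma> = (\<lambda>u. if u = d then e else if u = e then d else u)"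
  have ss: "\<And>u. \<sigma> (\<sigma> u) = u" by (simp add: \<sigma>_def)
  have sL: "\<And>u. u \<in> Lev n M \<Longrightarrow> \<sigma> u \<in> Lev n M" using d e by (simp add: \<sigma>_def)
  obtain us where us: "set us = Lev n M" "distinct us" using finite_distinct_list[OF Lev_finite] by blast
  define ps where "ps = map (\<lambda>u. (\<sigma> u, u)) us"
  have m1: "map fst ps = map \<sigma> us" and m2: "map snd ps = us" by (simp_all add: ps_def comp_def)
  have inj: "inj_on \<sigma> (set us)" by (metis inj_onI ss)
  have img: "\<sigma> ` Lev n M = Lev n M"
  proof
    show "\<sigma> ` Lev n M \<subseteq> Lev n M" using sL by blast
    show "Lev n M \<subseteq> \<sigma> ` Lev n M" using sL ss by (metis image_eqI subsetI)
  qed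
  have cp: "codepair n ps"
    unfolding codepair_def m1 m2 using npos us inj img Lev_adm
    by (simp add: distinct_map)
  have "\<forall>u\<in>Lev n M. \<forall>y\<in>phi n u. gfun n ps y = word_left n (\<sigma> u) + (y - word_left n u)"
  proof (intro ballI)
    fix u y assume u: "u \<in> Lev n M" and y: "y \<in> phi n u"
    have "(\<sigma> u, u) \<in> set ps" using u us by (auto simp: ps_def)
    then have "gfun n ps y = aff n (\<sigma> u) u y" using codepair.gfun_on[OF cp _ y] by blast
    moreover have "length (\<sigma> u) = length u" using sL[OF u] u by (simp add: Lev_def)
    ultimately show "gfun n ps y = word_left n (\<sigma> u) + (y - word_left n u)"
      using npos by (simp add: aff_def)
  qed
  then show ?thesis using codepair.gfun_Vn[OF cp] unfolding \<sigma>_def by blast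
qed

lemma wl_inj_Lev:
  assumes npos: "n > 0" and e: "e1 \<in> Lev n M" "e2 \<in> Lev n M" "word_left n e1 = word_left n e2"
  shows "e1 = e2"
proof -
  have "word_left n e1 \<in> phi n e2" using wl_in_phi[OF npos, of e2] e(3) by simp
  then show ?thesis using adm_disj[OF npos Lev_adm e(1,2) wl_in_phi[OF npos]] by blast
qed

lemma stab_inf:
  assumes n2: "n \<ge> 2" and x: "x \<in> {0..<1}" and z: "z \<in> {0..<1}" and xz: "x \<noteq> z"
  shows "infinite {g z |g. g \<in> Vn n \<and> g x = x}"
proof
  assume fin: "finite {g z |g. g \<in> Vn n \<and> g x = x}"
  define S where "S = {g z |g. g \<in> Vn n \<and> g x = x}"
  define K where "K = card S"
  have npos: "n > 0" using n2 by simp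
  obtain M0 where M0: "(1 / real n) ^ M0 < \<bar>x - z\<bar>"
    using real_arch_pow_inv[of "\<bar>x - z\<bar>" "1 / real n"] xz n2 by auto
  define M where "M = M0 + K + 2"
  have "1 / real n ^ M \<le> 1 / real n ^ M0"
    using n2 by (intro divide_left_mono power_increasing) (auto simp: M_def)
  then have small: "1 / real n ^ M < \<bar>x - z\<bar>" using M0 by (simp add: power_one_over)
  define dx where "dx = map (wseq n x) [0..<M]"
  define dz where "dz = map (wseq n z) [0..<M]"
  have dx: "dx \<in> Lev n M" "x \<in> phi n dx" using prefix_Lev[OF npos x] by (simp_all add: dx_def)
  have dz: "dz \<in> Lev n M" "z \<in> phi n dz" using prefix_Lev[OF npos z] by (simp_all add: dz_def)
  have ldx: "length dx = M" by (simp add: dx_def)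
  have dxz: "dx \<noteq> dz"
  proof
    assume "dx = dz"
    then have "x \<in> phi n dx" "z \<in> phi n dx" using dx dz by simp_all
    then have "\<bar>x - z\<bar> < 1 / real n ^ M" using ldx by (auto simp: phi_def)
    then show False using small by simp
  qed
  have sub: "(\<lambda>e. word_left n e + (z - word_left n dz)) ` (Lev n M - {dx}) \<subseteq> S"
  proof
    fix t assume "t \<in> (\<lambda>e. word_left n e + (z - word_left n dz)) ` (Lev n M - {dx})"
    then obtain e where e: "e \<in> Lev n M" "e \<noteq> dx" "t = word_left n e + (z - word_left n dz)" by blast
    obtain g where g: "g \<in> Vn n" and gf: "\<forall>u\<in>Lev n M. \<forall>y\<in>phi n u.
           g y = word_left n (if u = dz then e else if u = e then dz else u) + (y - word_left n u)"
      using lev_swap[OF npos dz(1) e(1)] by blast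
    have "g x = x" using gf dx dxz e(2) by auto
    moreover have "g z = t" using gf dz e(3) by auto
    ultimately show "t \<in> S" using g by (auto simp: S_def)
  qed
  have inj: "inj_on (\<lambda>e. word_left n e + (z - word_left n dz)) (Lev n M - {dx})"
    by (rule inj_onI) (use wl_inj_Lev[OF npos] in auto)
  have "card (Lev n M - {dx}) = n ^ M - 1" using dx(1) Lev_finite by (simp add: Lev_card)
  then have "n ^ M - 1 \<le> K"
    using card_mono[OF fin[folded S_def] sub] card_image[OF inj] by (simp add: K_def)
  moreover have "M < n ^ M"
  proof -
    have "M < 2 ^ M" by (rule less_exp)
    also have "2 ^ M \<le> n ^ M" using n2 by (rule power_mono) simp
    finally show ?thesis .
  qed
  ultimately show False by (simp add: M_def)
qed



definition delta :: "real \<Rightarrow> real \<Rightarrow> complex" where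
  "delta w = (\<lambda>z. if z = w then 1 else 0)"

lemma Hsp_supp: "h \<in> Hsp n x \<Longrightarrow> z \<notin> orb n x \<Longrightarrow> h z = 0"
  by (simp add: Hsp_def)

lemma Hsp_supp01: "h \<in> Hsp n x \<Longrightarrow> z \<notin> {0..<1} \<Longrightarrow> h z = 0"
  using orb_sub[of n x] by (auto simp: Hsp_def)

lemma Hsp_summable: "h \<in> Hsp n x \<Longrightarrow> (\<lambda>y. (cmod (h y))\<^sup>2) summable_on orb n x"
  by (simp add: Hsp_def)

lemma fin_Hsp:
  assumes "finite {z. h z \<noteq> 0}" "\<And>z. h z \<noteq> 0 \<Longrightarrow> z \<in> orb n x"
  shows "h \<in> Hsp n x"
proof -
  have "finite {z \<in> orb n x. (cmod (h z))\<^sup>2 \<noteq> 0}"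
    by (rule finite_subset[OF _ assms(1)]) auto
  then show ?thesis using assms(2) unfolding Hsp_def
    by (auto intro: finite_nonzero_values_imp_summable_on)
qed

lemma delta_Hsp: "w \<in> orb n x \<Longrightarrow> delta w \<in> Hsp n x"
  by (rule fin_Hsp) (auto simp: delta_def split: if_splits)

lemma rho_delta:
  assumes "n > 0" "g \<in> Vn n" "w \<in> {0..<1}"
  shows "rho n g (\<lambda>z. c * delta w z) = (\<lambda>z. c * delta (g w) z)"
proof -
  have bij: "bij_betw g {0..<1} {0..<1}" using assms(2) by (simp add: Vn_def)
  have gw: "g w \<in> {0..<1}" using Vn_range[OF assms(2,3)] .
  have "rho n g (\<lambda>z. c * delta w z) = (\<lambda>z. if z \<in> {0..<1} then c * delta w (inv_into {0..<1} g z) else 0)"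
    by (rule rho_eq[OF assms(1,2)]) (use assms(3) in \<open>auto simp: delta_def\<close>)
  also have "\<dots> = (\<lambda>z. c * delta (g w) z)"
  proof
    fix z
    show "(if z \<in> {0..<1} then c * delta w (inv_into {0..<1} g z) else 0) = c * delta (g w) z"
    proof (cases "z \<in> {0..<1}")
      case True
      have "inv_into {0..<1} g z = w \<longleftrightarrow> z = g w"
        using bij True assms(3) by (metis bij_betw_inv_into_right bij_betw_imp_inj_on inv_into_f_f)
      then show ?thesis using True by (auto simp: delta_def)
    next
      case False then show ?thesis using gw by (auto simp: delta_def)
    qed
  qed
  finally show ?thesis .
qed

lemma rho_delta1:
  assumes "n > 0" "g \<in> Vn n" "w \<in> {0..<1}"
  shows "rho n g (delta w) = delta (g w)"
  using rho_delta[OF assms, of 1] by simp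

lemma rho_fixed:
  assumes "n > 0" "g \<in> Vn n" "v = rho n g v" "v \<in> Hsp n y" "t \<in> {0..<1}"
  shows "v (g t) = v t"
proof -
  have bij: "bij_betw g {0..<1} {0..<1}" using assms(2) by (simp add: Vn_def)
  have "v (g t) = rho n g v (g t)" using assms(3) by simp
  also have "\<dots> = v (inv_into {0..<1} g (g t))"
  proof -
    have e: "rho n g v = (\<lambda>z. if z \<in> {0..<1} then v (inv_into {0..<1} g z) else 0)"
      by (rule rho_eq[OF assms(1,2)]) (rule Hsp_supp01[OF assms(4)])
    show ?thesis unfolding e using Vn_range[OF assms(2,5)] by simp
  qed
  also have "inv_into {0..<1} g (g t) = t" using bij assms(5) by (metis bij_betw_imp_inj_on inv_into_f_f)
  finally show ?thesis .
qed

lemma zero_const: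
  fixes v :: "real \<Rightarrow> complex"
  assumes sm: "(\<lambda>z. (cmod (v z))\<^sup>2) summable_on A" and B: "B \<subseteq> A" "infinite B" and c: "\<And>b. b \<in> B \<Longrightarrow> v b = c"
  shows "c = 0"
proof (rule ccontr)
  assume c0: "c \<noteq> 0"
  define I where "I = infsum (\<lambda>z. (cmod (v z))\<^sup>2) A"
  define N where "N = nat \<lceil>I / (cmod c)\<^sup>2\<rceil> + 1"
  obtain F where F: "finite F" "card F = N" "F \<subseteq> B" using infinite_arbitrarily_large[OF B(2)] by blast
  have "(\<Sum>z\<in>F. (cmod (v z))\<^sup>2) \<le> I"
    unfolding I_def by (rule finite_sum_le_infsum[OF sm F(1)]) (use F(3) B(1) in auto)
  moreover have "(\<Sum>z\<in>F. (cmod (v z))\<^sup>2) = (\<Sum>z\<in>F. (cmod c)\<^sup>2)"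
    using F c by (intro sum.cong) auto
  then have "(\<Sum>z\<in>F. (cmod (v z))\<^sup>2) = real N * (cmod c)\<^sup>2" using F by simp
  moreover have "I < real N * (cmod c)\<^sup>2"
  proof -
    have p: "(cmod c)\<^sup>2 > 0" using c0 by simp
    have "I / (cmod c)\<^sup>2 < real N" unfolding N_def by linarith
    then show ?thesis using p by (simp add: divide_less_eq)
  qed
  ultimately show False by simp
qed

lemma stab_zero:
  assumes n2: "n \<ge> 2" and x: "x \<in> {0..<1}" and v: "v \<in> Hsp n y"
    and inv: "\<And>g. g \<in> Vn n \<Longrightarrow> g x = x \<Longrightarrow> v = rho n g v"
    and zx: "z \<noteq> x"
  shows "v z = 0"
proof (cases "z \<in> orb n y")
  case False then show ?thesis using Hsp_supp[OF v] by blast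
next
  case True
  have npos: "n > 0" using n2 by simp
  have z01: "z \<in> {0..<1}" using True orb_sub by blast
  define B where "B = {g z |g. g \<in> Vn n \<and> g x = x}"
  have inf: "infinite B" unfolding B_def using stab_inf[OF n2 x z01 zx[symmetric]] .
  have sub: "B \<subseteq> orb n y" unfolding B_def using Vn_orb[OF npos _ z01] True by blast
  have cst: "\<And>b. b \<in> B \<Longrightarrow> v b = v z"
    unfolding B_def using rho_fixed[OF npos _ _ v z01] inv by blast
  show ?thesis by (rule zero_const[OF Hsp_summable[OF v] sub inf cst])
qed

lemma ip_delta: "x \<in> orb n y \<Longrightarrow> ip (orb n y) (delta x) (delta x) = 1"
proof -
  assume x: "x \<in> orb n y"
  have "ip (orb n y) (delta x) (delta x) = infsum (\<lambda>z. delta x z * cnj (delta x z)) {x}"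
    unfolding ip_def by (rule infsum_cong_neutral) (use x in \<open>auto simp: delta_def\<close>)
  then show ?thesis by (simp add: delta_def)
qed

lemma part1_dir:
  assumes n2: "n \<ge> 2" and x: "x \<in> {0..<1}" and y: "y \<in> {0..<1}" and ue: "unitarily_equivalent n x y"
  shows "orb n x = orb n y"
proof (rule ccontr)
  assume ne: "orb n x \<noteq> orb n y"
  have npos: "n > 0" using n2 by simp
  have xny: "x \<notin> orb n y"
  proof
    assume "x \<in> orb n y"
    then have "orel n x y" by (simp add: orb_alt)
    then show False using ne orb_eq_iff[OF x y] by blast
  qed
  obtain U where U: "unitary_between n x y U" and com: "\<forall>g\<in>Vn n. \<forall>h\<in>Hsp n x. U (rho n g h) = rho n g (U h)"
    using ue by (auto simp: unitarily_equivalent_def)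
  have dx: "delta x \<in> Hsp n x" using delta_Hsp orb_self[OF x] by blast
  define v where "v = U (delta x)"
  have vH: "v \<in> Hsp n y" using U dx by (auto simp: unitary_between_def v_def)
  have inv: "\<And>g. g \<in> Vn n \<Longrightarrow> g x = x \<Longrightarrow> v = rho n g v"
  proof -
    fix g assume g: "g \<in> Vn n" "g x = x"
    have "rho n g (delta x) = delta x" using rho_delta1[OF npos g(1) x] g(2) by simp
    then show "v = rho n g v" using com g(1) dx by (metis v_def)
  qed
  have "\<And>z. v z = 0"
  proof -
    fix z show "v z = 0"
    proof (cases "z = x")
      case True then show ?thesis using Hsp_supp[OF vH xny] by simp
    next
      case False then show ?thesis using stab_zero[OF n2 x vH inv] by blast
    qed
  qed
  then have "ip (orb n y) v v = 0" by (simp add: ip_def)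
  moreover have "ip (orb n y) v v = ip (orb n x) (delta x) (delta x)"
    using U dx by (simp add: unitary_between_def v_def)
  moreover have "ip (orb n x) (delta x) (delta x) = 1" using ip_delta orb_self[OF x] by blast
  ultimately show False by simp
qed

lemma part1_conv:
  assumes "orb n x = orb n y"
  shows "unitarily_equivalent n x y"
proof -
  have "Hsp n x = Hsp n y" using assms by (simp add: Hsp_def)
  then have "unitary_between n x y id" using assms by (simp add: unitary_between_def lin_on_def)
  then show ?thesis unfolding unitarily_equivalent_def by (intro exI[of _ id]) simp
qed



lemma ip_self:
  assumes "k \<in> Hsp n x"
  shows "ip (orb n x) k k = of_real (infsum (\<lambda>z. (cmod (k z))\<^sup>2) (orb n x))"
proof -
  have "ip (orb n x) k k = infsum (\<lambda>z. of_real ((cmod (k z))\<^sup>2)) (orb n x)"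
    unfolding ip_def by (rule infsum_cong) (rule complex_norm_square[symmetric])
  also have "\<dots> = of_real (infsum (\<lambda>z. (cmod (k z))\<^sup>2) (orb n x))"
    by (rule infsumI[OF has_sum_of_real[OF has_sum_infsum[OF Hsp_summable[OF assms]]]])
  finally show ?thesis .
qed

lemma ip_self_norm:
  assumes "k \<in> Hsp n x"
  shows "cmod (ip (orb n x) k k) = infsum (\<lambda>z. (cmod (k z))\<^sup>2) (orb n x)"
proof -
  have "infsum (\<lambda>z. (cmod (k z))\<^sup>2) (orb n x) \<ge> 0" by (rule infsum_nonneg) simp
  then show ?thesis using ip_self[OF assms] by simp
qed

lemma pt_le:
  assumes "k \<in> Hsp n x"
  shows "(cmod (k z))\<^sup>2 \<le> cmod (ip (orb n x) k k)"
proof (cases "z \<in> orb n x")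
  case False
  then have "k z = 0" using Hsp_supp[OF assms] by blast
  then show ?thesis by simp
next
  case True
  have "(\<Sum>t\<in>{z}. (cmod (k t))\<^sup>2) \<le> infsum (\<lambda>t. (cmod (k t))\<^sup>2) (orb n x)"
    by (rule finite_sum_le_infsum[OF Hsp_summable[OF assms]]) (use True in auto)
  then show ?thesis using ip_self_norm[OF assms] by simp
qed

lemma irred:
  assumes n2: "n \<ge> 2" and x: "x \<in> {0..<1}"
  shows "irreducible_rho n x"
  unfolding irreducible_rho_def
proof (intro allI impI)
  fix T assume TT: "bounded_op n x T \<and> (\<forall>g\<in>Vn n. \<forall>h\<in>Hsp n x. T (rho n g h) = rho n g (T h))"
  have npos: "n > 0" using n2 by simp
  have TH: "\<And>h. h \<in> Hsp n x \<Longrightarrow> T h \<in> Hsp n x" using TT by (auto simp: bounded_op_def)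
  have add: "\<And>h k. h \<in> Hsp n x \<Longrightarrow> k \<in> Hsp n x \<Longrightarrow> T (\<lambda>z. h z + k z) = (\<lambda>z. T h z + T k z)"
    using TT by (simp add: bounded_op_def lin_on_def)
  have scal: "\<And>a h. h \<in> Hsp n x \<Longrightarrow> T (\<lambda>z. a * h z) = (\<lambda>z. a * T h z)"
    using TT by (simp add: bounded_op_def lin_on_def)
  obtain C where C: "\<And>h. h \<in> Hsp n x \<Longrightarrow> cmod (ip (orb n x) (T h) (T h)) \<le> C * cmod (ip (orb n x) h h)"
    using TT unfolding bounded_op_def by blast
  have com: "\<And>g h. g \<in> Vn n \<Longrightarrow> h \<in> Hsp n x \<Longrightarrow> T (rho n g h) = rho n g (T h)" using TT by blast
  have xo: "x \<in> orb n x" using orb_self[OF x] .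
  have dx: "delta x \<in> Hsp n x" using delta_Hsp[OF xo] .
  define v where "v = T (delta x)"
  define c where "c = v x"
  have vH: "v \<in> Hsp n x" using TH[OF dx] by (simp add: v_def)
  have inv: "\<And>g. g \<in> Vn n \<Longrightarrow> g x = x \<Longrightarrow> v = rho n g v"
  proof -
    fix g assume g: "g \<in> Vn n" "g x = x"
    have "rho n g (delta x) = delta x" using rho_delta1[OF npos g(1) x] g(2) by simp
    then show "v = rho n g v" using com[OF g(1) dx] by (simp add: v_def)
  qed
  have Tdx: "T (delta x) = (\<lambda>z. c * delta x z)"
  proof
    fix z show "T (delta x) z = c * delta x z"
    proof (cases "z = x")
      case True then show ?thesis by (simp add: c_def v_def delta_def)
    next
      case False then show ?thesis using stab_zero[OF n2 x vH inv False] by (simp add: v_def delta_def)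
    qed
  qed
  have Tdw: "\<And>w. w \<in> orb n x \<Longrightarrow> T (delta w) = (\<lambda>z. c * delta w z)"
  proof -
    fix w assume w: "w \<in> orb n x"
    obtain g where g: "g \<in> Vn n" "g x = w" using trans_V[OF n2 x w] by blast
    have "delta w = rho n g (delta x)" using rho_delta1[OF npos g(1) x] g(2) by simp
    then have "T (delta w) = rho n g (T (delta x))" using com[OF g(1) dx] by simp
    also have "\<dots> = (\<lambda>z. c * delta w z)" unfolding Tdx using rho_delta[OF npos g(1) x] g(2) by simp
    finally show "T (delta w) = (\<lambda>z. c * delta w z)" .
  qed
  have zH: "(\<lambda>z. 0) \<in> Hsp n x" by (rule fin_Hsp) auto
  have T0: "T (\<lambda>z. 0) = (\<lambda>z. 0)" using scal[OF zH, of 0] by simp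
  have restr: "\<And>F h. finite F \<Longrightarrow> F \<subseteq> orb n x \<Longrightarrow> h \<in> Hsp n x \<Longrightarrow>
      T (\<lambda>z. if z \<in> F then h z else 0) = (\<lambda>z. c * (if z \<in> F then h z else 0))"
  proof -
    fix F h assume F: "finite F" "F \<subseteq> orb n x" and h: "h \<in> Hsp n x"
    show "T (\<lambda>z. if z \<in> F then h z else 0) = (\<lambda>z. c * (if z \<in> F then h z else 0))"
      using F
    proof (induction F rule: finite_induct)
      case empty then show ?case using T0 by simp
    next
      case (insert w F)
      define A where "A = (\<lambda>z. if z \<in> F then h z else 0)"
      define B where "B = (\<lambda>z. h w * delta w z)"
      have wo: "w \<in> orb n x" using insert.prems by simp
      have AH: "A \<in> Hsp n x"
      proof (rule fin_Hsp)
        show "finite {z. A z \<noteq> 0}" by (rule finite_subset[OF _ insert.hyps(1)]) (auto simp: A_def split: if_splits)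
        show "\<And>z. A z \<noteq> 0 \<Longrightarrow> z \<in> orb n x" using insert.prems by (auto simp: A_def split: if_splits)
      qed
      have BH: "B \<in> Hsp n x"
      proof (rule fin_Hsp)
        show "finite {z. B z \<noteq> 0}" by (rule finite_subset[of _ "{w}"]) (auto simp: B_def delta_def split: if_splits)
        show "\<And>z. B z \<noteq> 0 \<Longrightarrow> z \<in> orb n x" using wo by (auto simp: B_def delta_def split: if_splits)
      qed
      have e: "(\<lambda>z. if z \<in> insert w F then h z else 0) = (\<lambda>z. A z + B z)"
        using insert.hyps(2) by (auto simp: A_def B_def delta_def)
      have TA: "T A = (\<lambda>z. c * A z)" using insert.IH insert.prems by (simp add: A_def)
      have TB: "T B = (\<lambda>z. h w * (c * delta w z))"
        unfolding B_def scal[OF delta_Hsp[OF wo]] Tdw[OF wo] by simp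
      show ?case unfolding e add[OF AH BH] TA TB
        using insert.hyps(2) by (auto simp: A_def B_def delta_def algebra_simps)
    qed
  qed
  show "\<exists>c. \<forall>h\<in>Hsp n x. T h = (\<lambda>z. c * h z)"
  proof (intro exI ballI)
    fix h assume h: "h \<in> Hsp n x"
    show "T h = (\<lambda>z. c * h z)"
    proof
      fix z0
      show "T h z0 = c * h z0"
      proof (cases "z0 \<in> orb n x")
        case False
        then show ?thesis using Hsp_supp[OF h False] Hsp_supp[OF TH[OF h] False] by simp
      next
        case True
        define K where "K = sqrt \<bar>C\<bar> + cmod c"
        have K0: "K \<ge> 0" by (simp add: K_def)
        have bnd: "\<And>\<epsilon>. \<epsilon> > 0 \<Longrightarrow> cmod (T h z0 - c * h z0) \<le> K * sqrt \<epsilon>"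
        proof -
          fix \<epsilon> :: real assume ep: "\<epsilon> > 0"
          have smh: "(\<lambda>z. (cmod (h z))\<^sup>2) summable_on orb n x" using Hsp_summable[OF h] .
          obtain F where F: "finite F" "F \<subseteq> orb n x"
            "dist (sum (\<lambda>z. (cmod (h z))\<^sup>2) F) (infsum (\<lambda>z. (cmod (h z))\<^sup>2) (orb n x)) \<le> \<epsilon>"
            using infsum_finite_approximation[OF smh ep] by blast
          define r where "r = (\<lambda>z. if z \<in> F then h z else 0)"
          define d where "d = (\<lambda>z. if z \<in> F then 0 else h z)"
          have rH: "r \<in> Hsp n x"
          proof (rule fin_Hsp)
            show "finite {z. r z \<noteq> 0}" by (rule finite_subset[OF _ F(1)]) (auto simp: r_def split: if_splits)
            show "\<And>z. r z \<noteq> 0 \<Longrightarrow> z \<in> orb n x" using F(2) by (auto simp: r_def split: if_splits)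
          qed
          have smd: "(\<lambda>z. (cmod (d z))\<^sup>2) summable_on orb n x"
            by (rule summable_on_comparison_test[OF smh]) (auto simp: d_def)
          have dH: "d \<in> Hsp n x"
            unfolding Hsp_def using smd Hsp_supp[OF h] by (auto simp: d_def)
          have hrd: "h = (\<lambda>z. r z + d z)" by (auto simp: r_def d_def)
          have Th: "T h = (\<lambda>z. c * r z + T d z)"
            using add[OF rH dH] restr[OF F(1,2) h] hrd by (simp add: r_def)
          have diff: "T h z0 - c * h z0 = T d z0 - c * d z0"
            using Th hrd by (metis (no_types, lifting) add_diff_cancel_left distrib_left)
          have dsum: "infsum (\<lambda>z. (cmod (d z))\<^sup>2) (orb n x) \<le> \<epsilon>"
          proof -
            have s1: "(\<lambda>z. (cmod (h z))\<^sup>2) summable_on F" by (rule summable_on_subset[OF smh F(2)])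
            have s2: "(\<lambda>z. (cmod (h z))\<^sup>2) summable_on (orb n x - F)" by (rule summable_on_subset[OF smh]) auto
            have un: "orb n x = F \<union> (orb n x - F)" using F(2) by blast
            have "infsum (\<lambda>z. (cmod (h z))\<^sup>2) (orb n x)
                = infsum (\<lambda>z. (cmod (h z))\<^sup>2) F + infsum (\<lambda>z. (cmod (h z))\<^sup>2) (orb n x - F)"
              by (subst un, rule infsum_Un_disjoint[OF s1 s2]) auto
            moreover have "infsum (\<lambda>z. (cmod (d z))\<^sup>2) (orb n x) = infsum (\<lambda>z. (cmod (h z))\<^sup>2) (orb n x - F)"
              by (rule infsum_cong_neutral) (auto simp: d_def)
            moreover have "infsum (\<lambda>z. (cmod (h z))\<^sup>2) F = sum (\<lambda>z. (cmod (h z))\<^sup>2) F" using F(1) by simp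
            ultimately show ?thesis using F(3) by (simp add: dist_real_def)
          qed
          have nd: "cmod (ip (orb n x) d d) \<le> \<epsilon>" using dsum ip_self_norm[OF dH] by simp
          have nd0: "cmod (ip (orb n x) d d) \<ge> 0" by simp
          have "(cmod (d z0))\<^sup>2 \<le> \<epsilon>" using pt_le[OF dH, of z0] nd by simp
          then have a1: "cmod (d z0) \<le> sqrt \<epsilon>" by (rule real_le_rsqrt)
          have "(cmod (T d z0))\<^sup>2 \<le> C * cmod (ip (orb n x) d d)" using pt_le[OF TH[OF dH], of z0] C[OF dH] by simp
          also have "\<dots> \<le> \<bar>C\<bar> * cmod (ip (orb n x) d d)" using nd0 by (intro mult_right_mono) auto
          also have "\<dots> \<le> \<bar>C\<bar> * \<epsilon>" using nd by (intro mult_left_mono) auto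
          finally have "cmod (T d z0) \<le> sqrt (\<bar>C\<bar> * \<epsilon>)" by (rule real_le_rsqrt)
          then have a2: "cmod (T d z0) \<le> sqrt \<bar>C\<bar> * sqrt \<epsilon>" by (simp add: real_sqrt_mult)
          have "cmod (T d z0 - c * d z0) \<le> cmod (T d z0) + cmod c * cmod (d z0)"
            by (metis norm_mult norm_triangle_ineq4)
          also have "\<dots> \<le> sqrt \<bar>C\<bar> * sqrt \<epsilon> + cmod c * sqrt \<epsilon>"
            using a1 a2 by (intro add_mono mult_left_mono) auto
          finally have "cmod (T d z0 - c * d z0) \<le> K * sqrt \<epsilon>" by (simp add: K_def algebra_simps)
          then show "cmod (T h z0 - c * h z0) \<le> K * sqrt \<epsilon>" by (simp only: diff)
        qed
        show ?thesis
        proof (rule ccontr)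
          assume ne: "T h z0 \<noteq> c * h z0"
          define D where "D = cmod (T h z0 - c * h z0)"
          have D0: "D > 0" using ne by (simp add: D_def)
          define \<epsilon> where "\<epsilon> = (D / (K + 1))\<^sup>2"
          have ep: "\<epsilon> > 0" using D0 K0 by (simp add: \<epsilon>_def)
          have "sqrt \<epsilon> = D / (K + 1)" using D0 K0 by (simp add: \<epsilon>_def)
          then have "D \<le> K * (D / (K + 1))" using bnd[OF ep] by (simp add: D_def)
          moreover have "K * (D / (K + 1)) < D" using D0 K0 by (simp add: field_simps)
          ultimately show False by simp
        qed
      qed
    qed
  qed
qed


theorem theorem4p11:
  fixes n :: nat and x y :: real
  assumes "n \<ge> 2" and "x \<in> {0..<1}" and "y \<in> {0..<1}"
  shows "(unitarily_equivalent n x y \<longleftrightarrow> orb n x = orb n y) \<and> irreducible_rho n x"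
  using part1_dir[OF assms] part1_conv[of n x y] irred[OF assms(1,2)] by blast

end
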